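(* Let $Q=\sum_{i\in[m]}q_i\mathrm B(\sigma_i)\in\mathbb B_m$ with $0\le\sigma_1<\cdots<\sigma_m\le1/2$, and let $W=\sum_{j\in[n]}p_j\mathrm B(\varepsilon_j)\in\mathbb B_n$ be a $2n$-P-degradation of $Q$ with all $p_j>0$ and $\sigma_1\le\varepsilon_1\le\varepsilon_2\le\cdots\le\varepsilon_n\le\sigma_m$. Let $(k_{i,j})_{m\times n}$ be a 1-matrix of pattern $(q_1,\dots,q_m;p_1,\dots,p_n)$ with $\sum_{i\in[m]}k_{i,j}\sigma_i=p_j\varepsilon_j$ for all $j\in[n]$. For a nonnegative $m\times n$ matrix $(\kappa_{i,j})$ with column sums $\pi_j=\sum_i\kappa_{i,j}$, write $W[\kappa]=\sum_{j:\pi_j>0}\pi_j\mathrm B\big(\pi_j^{-1}\sum_i\kappa_{i,j}\sigma_i\big)$. 1. If $k_{i',j'}\neq0$ for some $i'\in[m]$, $j'\in[n-1]$ with $\sigma_{i'}\ge\varepsilon_{j'+1}$, let $k'$ be obtained from $k$ by setting $k'_{i',j'}=0$, $k'_{i',j'+1}=k_{i',j'+1}+k_{i',j'}$ and leaving all other entries unchanged. Then $W'=W[k']$ satisfies $W\preccurlyeq_{\mathrm P}W'\preccurlyeq_{\mathrm P}Q$. 2. If $k_{i'',j''}\neq0$ for some $i''\in[m]$, $2\le j''\le n$ with $\sigma_{i''}\le\varepsilon_{j''-1}$, let $k''$ be obtained from $k$ by setting $k''_{i'',j''}=0$, $k''_{i'',j''-1}=k_{i'',j''-1}+k_{i'',j''}$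 and leaving all other entries unchanged. Then $W''=W[k'']$ satisfies $W\preccurlyeq_{\mathrm P}W''\preccurlyeq_{\mathrm P}Q$. 3. If $k_{i_*,j^*}k_{i^*,j_*}\neq0$ for some $i_*,i^*\in[m]$, $j_*,j^*\in[n]$ with $\varepsilon_{j_*}\le\sigma_{i_*}<\sigma_{i^*}\le\varepsilon_{j^*}$, let $\delta=\min\{k_{i_*,j^*},k_{i^*,j_*}\}$ and let $k^*$ be obtained from $k$ by subtracting $\delta$ from the entries $(i_*,j^* )$ and $(i^*,j_* )$, adding $\delta$ to the entries $(i_*,j_* )$ and $(i^*,j^* )$, and leaving all other entries unchanged. Then $W^*=W[k^*]$ satisfies $W\preccurlyeq_{\mathrm P}W^*\preccurlyeq_{\mathrm P}Q$.
   Context: A BIDMC $W$ has input uniform on $\{0,1\}$, discrete output alphabet $\mathcal Y$ and transition probabilities $\Pr(y\mid x)$; its LR-profile is $P_W(\varepsilon)=\Pr\big(\mathcal L_W(y)=\varepsilon/(1-\varepsilon)\big)$ with $\mathcal L_W(\hat y)=\Pr(y=\hat y\mid x=0)/\Pr(y=\hat y\mid x=1)$, and $W\cong W'$ if LR-profiles coincide; channel identities are up to $\cong$. $W'\preccurlyeq W$ if there is a channel $T$ from the output alphabet of $W$ to that of $W'$ with $\Pr(y'\mid x'=a)=\sum_{y}\Pr(y\mid x=a)T(y'\mid y)$. $\mathrm B(\varepsilon)$ is the BSC with crossover probability $\varepsilon$; $\sum_iq_iW_i$ (with $(q_i)$ a probability vector) denotes the random switching channel (use $W_i$ with probability $q_i$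 independently of the input and output the index $i$ along with the output). $\mathbb B_n$ is the set of BIDMCs equivalent to $\sum_{i\in[n]}p_i\mathrm B(\varepsilon_i)$ for a probability vector $(p_i)$ and $\varepsilon_i\in[0,1]$. $P_\epsilon(W)=\frac12\sum_{y}\min\{\Pr(y\mid x=0),\Pr(y\mid x=1)\}$. For a symmetric BIDMC $Q$ and $n\ge1$, $W$ is a $2n$-P-degradation of $Q$, written $W\preccurlyeq_{\mathrm P}Q$, if $W\in\mathbb B_n$, $W\preccurlyeq Q$ and $P_\epsilon(W)=\min\{P_\epsilon(W'):W'\in\mathbb B_n,\ W'\preccurlyeq Q\}$. A 1-matrix of pattern $(q_1,\dots,q_m;p_1,\dots,p_n)$ is a matrix $(k_{i,j})_{m\times n}$ with $k_{i,j}\ge0$, $\sum_{j}k_{i,j}=q_i$ for all $i$ and $\sum_{i}k_{i,j}=p_j$ for all $j$. *)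

theory Defs
  imports "HOL-Probability.Probability"
begin

text \<open>A BIDMC: input alphabet {0,1} rendered as bool (False = 0, True = 1),
  discrete output alphabet rendered as nat; W x is the output distribution given input x.\<close>
type_synonym bidmc = "bool \<Rightarrow> nat pmf"

text \<open>LR value written as eps = Pr(y|0)/(Pr(y|0)+Pr(y|1)), i.e. L(y) = eps/(1-eps).\<close>
definition lr_eps :: "bidmc \<Rightarrow> nat \<Rightarrow> real" where
  "lr_eps W y = pmf (W False) y / (pmf (W False) y + pmf (W True) y)"

text \<open>LR-profile: probability (uniform input) that L_W(y) = eps/(1-eps).\<close>
definition lr_profile :: "bidmc \<Rightarrow> real \<Rightarrow> real" where
  "lr_profile W e =
     (measure_pmf.prob (W False) {y. lr_eps W y = e} + measure_pmf.prob (W True) {y. lr_eps W y = e}) / 2"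

definition ch_equiv :: "bidmc \<Rightarrow> bidmc \<Rightarrow> bool" where
  "ch_equiv W W' \<longleftrightarrow> lr_profile W = lr_profile W'"

definition degraded :: "bidmc \<Rightarrow> bidmc \<Rightarrow> bool" where
  "degraded W' W \<longleftrightarrow> (\<exists>T :: nat \<Rightarrow> nat pmf. \<forall>a. W' a = bind_pmf (W a) T)"

definition sym_channel :: "bidmc \<Rightarrow> bool" where
  "sym_channel Q \<longleftrightarrow> (\<exists>\<pi>. bij \<pi> \<and> (\<forall>y. \<pi> (\<pi> y) = y) \<and>
       (\<forall>y. pmf (Q False) y = pmf (Q True) (\<pi> y)))"

definition weights_pmf :: "nat \<Rightarrow> (nat \<Rightarrow> real) \<Rightarrow> nat pmf" where
  "weights_pmf n p = embed_pmf (\<lambda>i. if i < n then p i else 0)"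

definition prob_vec :: "nat \<Rightarrow> (nat \<Rightarrow> real) \<Rightarrow> bool" where
  "prob_vec n p \<longleftrightarrow> (\<forall>i<n. 0 \<le> p i) \<and> (\<Sum>i<n. p i) = 1"

text \<open>Random switching channel sum_{i<n} p i B(eps i); output (i, b) encoded as 2*i + b.\<close>
definition bsc_mix :: "nat \<Rightarrow> (nat \<Rightarrow> real) \<Rightarrow> (nat \<Rightarrow> real) \<Rightarrow> bidmc" where
  "bsc_mix n p eps x =
     bind_pmf (weights_pmf n p)
       (\<lambda>i. map_pmf (\<lambda>f. 2 * i + of_bool (f \<noteq> x)) (bernoulli_pmf (eps i)))"

definition in_B :: "nat \<Rightarrow> bidmc \<Rightarrow> bool" where
  "in_B n W \<longleftrightarrow> (\<exists>p eps. prob_vec n p \<and> (\<forall>i<n. 0 \<le> eps i \<and> eps i \<le> 1)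
                        \<and> ch_equiv W (bsc_mix n p eps))"

definition P_err :: "bidmc \<Rightarrow> real" where
  "P_err W = infsum (\<lambda>y. min (pmf (W False) y) (pmf (W True) y)) UNIV / 2"

definition P_degr :: "nat \<Rightarrow> bidmc \<Rightarrow> bidmc \<Rightarrow> bool" where
  "P_degr n W Q \<longleftrightarrow> sym_channel Q \<and> in_B n W \<and> degraded W Q \<and>
     (\<forall>W'. in_B n W' \<and> degraded W' Q \<longrightarrow> P_err W \<le> P_err W')"

definition one_matrix :: "nat \<Rightarrow> nat \<Rightarrow> (nat \<Rightarrow> real) \<Rightarrow> (nat \<Rightarrow> real) \<Rightarrow> (nat \<Rightarrow> nat \<Rightarrow> real) \<Rightarrow> bool" where
  "one_matrix m n q p k \<longleftrightarrow> (\<forall>i<m. \<forall>j<n. 0 \<le> k i j) \<and>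
     (\<forall>i<m. (\<Sum>j<n. k i j) = q i) \<and> (\<forall>j<n. (\<Sum>i<m. k i j) = p j)"

text \<open>W[kappa]: columns with zero sum get weight 0 (hence are irrelevant up to equivalence).\<close>
definition mat_channel :: "nat \<Rightarrow> nat \<Rightarrow> (nat \<Rightarrow> real) \<Rightarrow> (nat \<Rightarrow> nat \<Rightarrow> real) \<Rightarrow> bidmc" where
  "mat_channel m n \<sigma> \<kappa> = bsc_mix n (\<lambda>j. \<Sum>i<m. \<kappa> i j)
      (\<lambda>j. if (\<Sum>i<m. \<kappa> i j) > 0 then (\<Sum>i<m. \<kappa> i j * \<sigma> i) / (\<Sum>i<m. \<kappa> i j) else 0)"

end

theory Submission
  imports Defs
begin

lemma pmf_weights:
  assumes "prob_vec n w"
  shows "pmf (weights_pmf n w) i = (if i < n then w i else 0)"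
proof -
  let ?f = "\<lambda>i. if i < n then w i else 0"
  have nn: "\<And>i. 0 \<le> ?f i" using assms by (auto simp: prob_vec_def)
  have "(\<integral>\<^sup>+x. ennreal (?f x) \<partial>count_space UNIV) = (\<Sum>x<n. ennreal (?f x))"
    by (rule nn_integral_count_space') auto
  also have "\<dots> = ennreal (\<Sum>x<n. ?f x)" by (rule sum_ennreal) (rule nn)
  also have "(\<Sum>x<n. ?f x) = 1" using assms by (simp add: prob_vec_def)
  finally have pr: "(\<integral>\<^sup>+x. ennreal (?f x) \<partial>count_space UNIV) = 1" by simp
  show ?thesis unfolding weights_pmf_def
    using pmf_embed_pmf[of ?f, OF nn pr] by simp
qed

lemma set_weights:
  assumes "prob_vec n w" "i \<in> set_pmf (weights_pmf n w)"
  shows "i < n"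
  using assms pmf_weights[OF assms(1), of i] by (auto simp: set_pmf_eq split: if_splits)

lemma pmf_bind_weights:
  assumes "prob_vec n w"
  shows "pmf (bind_pmf (weights_pmf n w) f) y = (\<Sum>i<n. w i * pmf (f i) y)"
proof -
  have "pmf (bind_pmf (weights_pmf n w) f) y = (\<Sum>i\<in>{..<n}. pmf (weights_pmf n w) i *\<^sub>R pmf (f i) y)"
    unfolding pmf_bind
    by (rule integral_measure_pmf) (use set_weights[OF assms] in auto)
  also have "\<dots> = (\<Sum>i<n. w i * pmf (f i) y)"
    by (rule sum.cong) (auto simp: pmf_weights[OF assms])
  finally show ?thesis .
qed

lemma pmf_bind_bern:
  assumes "0 \<le> c" "c \<le> 1"
  shows "pmf (bind_pmf (bernoulli_pmf c) h) y = c * pmf (h True) y + (1 - c) * pmf (h False) y"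
  unfolding pmf_bind using assms by simp

definition bsc_term :: "nat \<Rightarrow> (nat \<Rightarrow> real) \<Rightarrow> (nat \<Rightarrow> real) \<Rightarrow> bool \<Rightarrow> nat \<Rightarrow> real" where
  "bsc_term n p e x y = (\<Sum>l<n. p l * (e l * of_bool (y = 2*l + of_bool (\<not> x)) + (1 - e l) * of_bool (y = 2*l + of_bool x)))"

lemma pmf_bsc_sum:
  assumes "prob_vec n p" "\<And>l. l < n \<Longrightarrow> 0 \<le> e l \<and> e l \<le> 1"
  shows "pmf (bsc_mix n p e x) y = bsc_term n p e x y"
  unfolding bsc_mix_def bsc_term_def pmf_bind_weights[OF assms(1)]
proof (rule sum.cong[OF refl])
  fix l assume "l \<in> {..<n}"
  then have "0 \<le> e l" "e l \<le> 1" using assms(2) by auto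
  then show "p l * pmf (map_pmf (\<lambda>f. 2 * l + of_bool (f \<noteq> x)) (bernoulli_pmf (e l))) y =
        p l * (e l * of_bool (y = 2*l + of_bool (\<not> x)) + (1 - e l) * of_bool (y = 2*l + of_bool x))"
    unfolding map_pmf_def pmf_bind_bern[OF \<open>0 \<le> e l\<close> \<open>e l \<le> 1\<close>]
    by (cases x) (auto simp: indicator_def)
qed

lemma pmf_bsc:
  assumes "prob_vec n p" "\<And>l. l < n \<Longrightarrow> 0 \<le> e l \<and> e l \<le> 1"
  shows "pmf (bsc_mix n p e x) y = (if y div 2 < n then p (y div 2) * (if odd y = (\<not> x) then e (y div 2) else 1 - e (y div 2)) else 0)"
proof -
  have "\<And>l. p l * (e l * of_bool (y = 2*l + of_bool (\<not> x)) + (1 - e l) * of_bool (y = 2*l + of_bool x))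
     = (if l = y div 2 then p (y div 2) * (if odd y = (\<not> x) then e (y div 2) else 1 - e (y div 2)) else 0)"
  proof -
    fix l
    have e1: "(y = 2*l + 1) = (l = y div 2 \<and> odd y)" by presburger
    have e0: "(y = 2*l) = (l = y div 2 \<and> even y)" by presburger
    show "?thesis l" by (cases x) (auto simp: e1 e0)
  qed
  then have "bsc_term n p e x y = (if y div 2 < n then p (y div 2) * (if odd y = (\<not> x) then e (y div 2) else 1 - e (y div 2)) else 0)"
    unfolding bsc_term_def by (simp add: sum.delta' del: One_nat_def)
  then show ?thesis using pmf_bsc_sum[OF assms] by simp
qed

lemma sum_even_odd: "(\<Sum>y<2*n. f y) = (\<Sum>i<n. f (2*i) + f (2*i+1))" for f :: "nat \<Rightarrow> real"
  by (induction n) (auto simp: algebra_simps)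

lemma min_mult_nn: "0 \<le> (c::real) \<Longrightarrow> min (c * a) (c * b) = c * min a b"
  by (simp add: min_mult_distrib_left)

lemma P_err_bsc:
  assumes "prob_vec n p" "\<And>l. l < n \<Longrightarrow> 0 \<le> e l \<and> e l \<le> 1"
  shows "P_err (bsc_mix n p e) = (\<Sum>l<n. p l * min (e l) (1 - e l))"
proof -
  let ?f = "\<lambda>y. min (pmf (bsc_mix n p e False) y) (pmf (bsc_mix n p e True) y)"
  have "infsum ?f UNIV = infsum ?f {..<2*n}"
    by (rule infsum_cong_neutral) (auto simp: pmf_bsc[OF assms])
  also have "\<dots> = (\<Sum>y<2*n. ?f y)" by simp
  also have "\<dots> = (\<Sum>i<n. ?f (2*i) + ?f (2*i+1))" by (rule sum_even_odd)
  also have "\<dots> = (\<Sum>i<n. 2 * (p i * min (e i) (1 - e i)))"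
  proof (rule sum.cong[OF refl])
    fix i assume "i \<in> {..<n}"
    then have "0 \<le> p i" using assms(1) by (auto simp: prob_vec_def)
    then show "?f (2*i) + ?f (2*i+1) = 2 * (p i * min (e i) (1 - e i))"
      using \<open>i \<in> {..<n}\<close> by (simp add: pmf_bsc[OF assms] min_mult_nn min.commute)
  qed
  finally show ?thesis unfolding P_err_def by (simp add: sum_distrib_left[symmetric])
qed

lemma sym_bsc:
  assumes "prob_vec n p" "\<And>l. l < n \<Longrightarrow> 0 \<le> e l \<and> e l \<le> 1"
  shows "sym_channel (bsc_mix n p e)"
  unfolding sym_channel_def
proof (intro exI conjI allI)
  let ?\<pi> = "\<lambda>y::nat. if even y then y + 1 else y - 1"
  show inv: "?\<pi> (?\<pi> y) = y" for y by presburger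
  show "bij ?\<pi>" by (rule involuntory_imp_bij) (rule inv)
  fix y
  have "?\<pi> y div 2 = y div 2" by presburger
  moreover have "odd (?\<pi> y) = even y" by auto
  ultimately show "pmf (bsc_mix n p e False) y = pmf (bsc_mix n p e True) (?\<pi> y)"
    by (simp only: pmf_bsc[OF assms]) simp
qed

lemma bsc_cong:
  assumes "prob_vec n p" "\<And>j. j < n \<Longrightarrow> p j = p' j" "\<And>j. j < n \<Longrightarrow> p j \<noteq> 0 \<Longrightarrow> e j = e' j"
  shows "bsc_mix n p e = bsc_mix n p' e'"
proof -
  have "(\<lambda>i. if i < n then p i else 0) = (\<lambda>i. if i < n then p' i else 0)"
    using assms(2) by auto
  then have w: "weights_pmf n p = weights_pmf n p'" unfolding weights_pmf_def by simp
  show ?thesis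
  proof
    fix x
    show "bsc_mix n p e x = bsc_mix n p' e' x"
      unfolding bsc_mix_def w[symmetric]
    proof (rule bind_pmf_cong[OF refl])
      fix i assume i: "i \<in> set_pmf (weights_pmf n p)"
      then have "i < n" using set_weights[OF assms(1)] by auto
      moreover have "p i \<noteq> 0" using i pmf_weights[OF assms(1), of i] \<open>i < n\<close> by (auto simp: set_pmf_eq)
      ultimately show "map_pmf (\<lambda>f. 2 * i + of_bool (f \<noteq> x)) (bernoulli_pmf (e i)) =
         map_pmf (\<lambda>f. 2 * i + of_bool (f \<noteq> x)) (bernoulli_pmf (e' i))"
        using assms(3) by simp
    qed
  qed
qed

lemma degraded_trans: "degraded A B \<Longrightarrow> degraded B C \<Longrightarrow> degraded A C"
  unfolding degraded_def
proof (elim exE)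
  fix T1 T2 assume 1: "\<forall>a. A a = bind_pmf (B a) T1" and 2: "\<forall>a. B a = bind_pmf (C a) T2"
  show "\<exists>T. \<forall>a. A a = bind_pmf (C a) T"
    by (rule exI[of _ "\<lambda>y. bind_pmf (T2 y) T1"]) (simp add: 1 2 bind_assoc_pmf)
qed

lemma swap_alg:
  fixes R :: "nat \<Rightarrow> nat \<Rightarrow> real"
  shows "(\<Sum>j<N. e' j * (\<Sum>l<n. R j l * X l) + (1 - e' j) * (\<Sum>l<n. R j l * Y l))
       = (\<Sum>l<n. X l * (\<Sum>j<N. R j l * e' j) + Y l * (\<Sum>j<N. R j l * (1 - e' j)))"
proof -
  have "(\<Sum>j<N. e' j * (\<Sum>l<n. R j l * X l) + (1 - e' j) * (\<Sum>l<n. R j l * Y l))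
      = (\<Sum>j<N. \<Sum>l<n. X l * (R j l * e' j) + Y l * (R j l * (1 - e' j)))"
    by (simp only: sum_distrib_left sum.distrib[symmetric]) (rule sum.cong[OF refl], rule sum.cong[OF refl], simp add: algebra_simps)
  also have "\<dots> = (\<Sum>l<n. \<Sum>j<N. X l * (R j l * e' j) + Y l * (R j l * (1 - e' j)))"
    by (rule sum.swap)
  also have "\<dots> = (\<Sum>l<n. X l * (\<Sum>j<N. R j l * e' j) + Y l * (\<Sum>j<N. R j l * (1 - e' j)))"
    by (rule sum.cong[OF refl]) (simp add: sum_distrib_left sum.distrib)
  finally show ?thesis .
qed

lemma merge:
  fixes N n :: nat and p' e' p e :: "nat \<Rightarrow> real" and R :: "nat \<Rightarrow> nat \<Rightarrow> real"
  assumes pv': "prob_vec N p'" and pv: "prob_vec n p"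
    and e'r: "\<And>j. j<N \<Longrightarrow> 0 \<le> e' j \<and> e' j \<le> 1" and er: "\<And>l. l<n \<Longrightarrow> 0 \<le> e l \<and> e l \<le> 1"
    and Rnn: "\<And>j l. j<N \<Longrightarrow> l<n \<Longrightarrow> 0 \<le> R j l"
    and Rrow: "\<And>j. j<N \<Longrightarrow> (\<Sum>l<n. R j l) = p' j"
    and Rcol: "\<And>l. l<n \<Longrightarrow> (\<Sum>j<N. R j l) = p l"
    and Rmean: "\<And>l. l<n \<Longrightarrow> (\<Sum>j<N. R j l * e' j) = p l * e l"
  shows "degraded (bsc_mix n p e) (bsc_mix N p' e') \<and> P_err (bsc_mix N p' e') \<le> P_err (bsc_mix n p e)"
proof
  have p'nn: "\<And>j. j < N \<Longrightarrow> 0 \<le> p' j" using pv' by (auto simp: prob_vec_def)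
  have Rm1: "(\<Sum>j<N. R j l * (1 - e' j)) = p l - p l * e l" if "l < n" for l
    using Rcol[OF that] Rmean[OF that] by (simp add: algebra_simps sum_subtractf)
  define T where "T y' = (if y' div 2 < N \<and> 0 < p' (y' div 2)
      then map_pmf (\<lambda>l. 2*l + y' mod 2) (weights_pmf n (\<lambda>l. R (y' div 2) l / p' (y' div 2)))
      else return_pmf 0)" for y'
  have C: "p' j * pmf (T (2*j+b)) y = (\<Sum>l<n. R j l * of_bool (y = 2*l+b))"
    if j: "j < N" and b: "b \<le> 1" for j b y
  proof (cases "0 < p' j")
    case True
    have pvj: "prob_vec n (\<lambda>l. R j l / p' j)"
      unfolding prob_vec_def using True Rnn[OF j] Rrow[OF j]
      by (auto simp: sum_divide_distrib[symmetric])
    have d: "(2*j+b) div 2 = j" "(2*j+b) mod 2 = b" using b by auto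
    have "T (2*j+b) = map_pmf (\<lambda>l. 2*l + b) (weights_pmf n (\<lambda>l. R j l / p' j))"
      unfolding T_def d using True j by simp
    then have "pmf (T (2*j+b)) y = (\<Sum>l<n. R j l / p' j * of_bool (y = 2*l+b))"
      unfolding map_pmf_def by (simp add: pmf_bind_weights[OF pvj] indicator_def eq_commute)
    then show ?thesis using True by (simp add: sum_distrib_left)
  next
    case False
    then have z: "p' j = 0" using p'nn[OF j] by simp
    then have "\<forall>l\<in>{..<n}. R j l = 0" using Rrow[OF j] Rnn[OF j]
      by (subst sum_nonneg_eq_0_iff[symmetric]) auto
    then show ?thesis using z by simp
  qed
  have e'r': "\<And>j. j<N \<Longrightarrow> 0 \<le> e' j" "\<And>j. j<N \<Longrightarrow> e' j \<le> 1" using e'r by auto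
  show "degraded (bsc_mix n p e) (bsc_mix N p' e')"
    unfolding degraded_def
  proof (intro exI allI)
    fix x
    show "bsc_mix n p e x = bind_pmf (bsc_mix N p' e' x) T"
    proof (rule pmf_eqI)
      fix y
      have "pmf (bind_pmf (bsc_mix N p' e' x) T) y =
         (\<Sum>j<N. p' j * (e' j * pmf (T (2*j + of_bool (\<not> x))) y + (1 - e' j) * pmf (T (2*j + of_bool x)) y))"
        unfolding bsc_mix_def bind_assoc_pmf pmf_bind_weights[OF pv'] bind_map_pmf
        by (rule sum.cong[OF refl]) (simp add: pmf_bind_bern e'r')
      also have "\<dots> = (\<Sum>j<N. e' j * (p' j * pmf (T (2*j + of_bool (\<not> x))) y) + (1 - e' j) * (p' j * pmf (T (2*j + of_bool x)) y))"
        by (simp add: algebra_simps)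
      also have "\<dots> = (\<Sum>j<N. e' j * (\<Sum>l<n. R j l * of_bool (y = 2*l + of_bool (\<not> x))) + (1 - e' j) * (\<Sum>l<n. R j l * of_bool (y = 2*l + of_bool x)))"
        by (rule sum.cong[OF refl]) (simp add: C)
      also have "\<dots> = (\<Sum>l<n. of_bool (y = 2*l + of_bool (\<not> x)) * (\<Sum>j<N. R j l * e' j) + of_bool (y = 2*l + of_bool x) * (\<Sum>j<N. R j l * (1 - e' j)))"
        by (rule swap_alg)
      also have "\<dots> = bsc_term n p e x y"
        unfolding bsc_term_def
      proof (rule sum.cong[OF refl])
        fix l assume "l \<in> {..<n}"
        then have l: "l < n" by simp
        show "of_bool (y = 2*l + of_bool (\<not> x)) * (\<Sum>j<N. R j l * e' j) + of_bool (y = 2*l + of_bool x) * (\<Sum>j<N. R j l * (1 - e' j))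
          = p l * (e l * of_bool (y = 2*l + of_bool (\<not> x)) + (1 - e l) * of_bool (y = 2*l + of_bool x))"
          unfolding Rmean[OF l] Rm1[OF l] by (simp add: algebra_simps)
      qed
      also have "\<dots> = pmf (bsc_mix n p e x) y" using pmf_bsc_sum[OF pv er] by simp
      finally show "pmf (bsc_mix n p e x) y = pmf (bind_pmf (bsc_mix N p' e' x) T) y" by simp
    qed
  qed
  have "P_err (bsc_mix N p' e') = (\<Sum>j<N. p' j * min (e' j) (1 - e' j))" by (rule P_err_bsc[OF pv' e'r])
  also have "\<dots> = (\<Sum>j<N. \<Sum>l<n. R j l * min (e' j) (1 - e' j))"
    by (rule sum.cong[OF refl]) (simp add: Rrow[symmetric] sum_distrib_right)
  also have "\<dots> = (\<Sum>l<n. \<Sum>j<N. R j l * min (e' j) (1 - e' j))" by (rule sum.swap)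
  also have "\<dots> \<le> (\<Sum>l<n. min (\<Sum>j<N. R j l * e' j) (\<Sum>j<N. R j l * (1 - e' j)))"
  proof (rule sum_mono)
    fix l assume l: "l \<in> {..<n}"
    have "(\<Sum>j<N. R j l * min (e' j) (1 - e' j)) \<le> (\<Sum>j<N. R j l * e' j)"
      by (rule sum_mono) (use l Rnn in \<open>auto intro!: mult_left_mono\<close>)
    moreover have "(\<Sum>j<N. R j l * min (e' j) (1 - e' j)) \<le> (\<Sum>j<N. R j l * (1 - e' j))"
      by (rule sum_mono) (use l Rnn in \<open>auto intro!: mult_left_mono\<close>)
    ultimately show "(\<Sum>j<N. R j l * min (e' j) (1 - e' j)) \<le> min (\<Sum>j<N. R j l * e' j) (\<Sum>j<N. R j l * (1 - e' j))"
      by simp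
  qed
  also have "\<dots> = (\<Sum>l<n. p l * min (e l) (1 - e l))"
  proof (rule sum.cong[OF refl])
    fix l assume l: "l \<in> {..<n}"
    then have "0 \<le> p l" using pv by (auto simp: prob_vec_def)
    then show "min (\<Sum>j<N. R j l * e' j) (\<Sum>j<N. R j l * (1 - e' j)) = p l * min (e l) (1 - e l)"
      using l unfolding lessThan_iff by (simp only: Rmean Rm1) (simp add: min_mult_nn[symmetric] right_diff_distrib)
  qed
  also have "\<dots> = P_err (bsc_mix n p e)" by (rule P_err_bsc[OF pv er, symmetric])
  finally show "P_err (bsc_mix N p' e') \<le> P_err (bsc_mix n p e)" .
qed

lemma sum_two:
  fixes g :: "nat \<Rightarrow> real"
  assumes "a \<noteq> b" "a < n" "b < n" "\<And>l. l < n \<Longrightarrow> l \<noteq> a \<Longrightarrow> l \<noteq> b \<Longrightarrow> g l = 0"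
  shows "(\<Sum>l<n. g l) = g a + g b"
proof -
  have "(\<Sum>l<n. g l) = (\<Sum>l\<in>{a,b}. g l)"
    by (rule sum.mono_neutral_right) (use assms in auto)
  then show ?thesis using assms(1) by simp
qed

lemma alpha_exists:
  fixes A B pa pb u v ea eb :: real
  assumes A: "0 \<le> A" and B: "0 \<le> B" and pa: "0 < pa" and pb: "0 < pb"
    and mass: "A + B = pa + pb" and mom: "A * u + B * v = pa * ea + pb * eb"
    and o: "u \<le> ea" "ea \<le> eb" "eb \<le> v"
  shows "\<exists>\<alpha>. 0 \<le> \<alpha> \<and> \<alpha> \<le> pa \<and> \<alpha> \<le> A \<and> pa - \<alpha> \<le> B \<and> \<alpha> * u + (pa - \<alpha>) * v = pa * ea"
proof (cases "u < v")
  case True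
  define \<alpha> where "\<alpha> = pa * (v - ea) / (v - u)"
  have d: "0 < v - u" using True by simp
  have A1: "A * (v - u) = pa * (v - ea) + pb * (v - eb)" using mass mom by algebra
  have B1: "B * (v - u) = pa * (ea - u) + pb * (eb - u)" using mass mom by algebra
  have "0 \<le> \<alpha>" unfolding \<alpha>_def using d pa o by auto
  moreover have "\<alpha> \<le> pa" unfolding \<alpha>_def using d pa o
    by (simp add: divide_le_eq mult_left_mono)
  moreover have "\<alpha> \<le> A" unfolding \<alpha>_def using d A1 pb o
    by (simp add: divide_le_eq)
  moreover have e: "pa - \<alpha> = pa * (ea - u) / (v - u)" unfolding \<alpha>_def using d
    by (simp add: field_simps)
  moreover have "pa - \<alpha> \<le> B" unfolding e using d B1 pb o
    by (simp add: divide_le_eq)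
  moreover have "\<alpha> * u + (pa - \<alpha>) * v = pa * ea"
  proof -
    have "\<alpha> * u + (pa - \<alpha>) * v = (pa * ((v - ea) * u + (ea - u) * v)) / (v - u)"
      unfolding e unfolding \<alpha>_def by (simp add: add_divide_distrib[symmetric] algebra_simps)
    also have "(v - ea) * u + (ea - u) * v = ea * (v - u)" by algebra
    finally show ?thesis using d by simp
  qed
  ultimately show ?thesis by blast
next
  case False
  then have uv: "u = v" "ea = u" "eb = u" using o by auto
  define \<alpha> where "\<alpha> = pa * A / (A + B)"
  have s: "0 < A + B" using mass pa pb by simp
  have "0 \<le> \<alpha>" unfolding \<alpha>_def using s pa A by auto
  moreover have "\<alpha> \<le> pa" unfolding \<alpha>_def using s pa A B
    by (simp add: divide_le_eq mult_left_mono)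
  moreover have "\<alpha> \<le> A" unfolding \<alpha>_def using s pb A mass mult_nonneg_nonneg[OF A, of pb]
    by (simp add: divide_le_eq algebra_simps)
  moreover have e: "pa - \<alpha> = pa * B / (A + B)" unfolding \<alpha>_def using s
    by (simp add: field_simps)
  moreover have "pa - \<alpha> \<le> B" unfolding e using s pb B mass mult_nonneg_nonneg[OF B, of pb]
    by (simp add: divide_le_eq algebra_simps)
  moreover have "\<alpha> * u + (pa - \<alpha>) * v = pa * ea" using uv by (simp add: algebra_simps)
  ultimately show ?thesis by blast
qed

lemma two_col:
  fixes p p' e e' :: "nat \<Rightarrow> real"
  assumes pv: "prob_vec n p" and pv': "prob_vec n p'"
    and er: "\<And>l. l<n \<Longrightarrow> 0 \<le> e l \<and> e l \<le> 1" and e'r: "\<And>l. l<n \<Longrightarrow> 0 \<le> e' l \<and> e' l \<le> 1"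
    and ab: "a \<noteq> b" "a < n" "b < n" and pa: "0 < p a" and pb: "0 < p b"
    and oth: "\<And>j. j<n \<Longrightarrow> j \<noteq> a \<Longrightarrow> j \<noteq> b \<Longrightarrow> p' j = p j \<and> e' j = e j"
    and mass: "p' a + p' b = p a + p b"
    and mom: "p' a * e' a + p' b * e' b = p a * e a + p b * e b"
    and ia: "0 < p' a \<Longrightarrow> e' a \<le> e a" and ib: "0 < p' b \<Longrightarrow> e b \<le> e' b" and eab: "e a \<le> e b"
  shows "degraded (bsc_mix n p e) (bsc_mix n p' e') \<and> P_err (bsc_mix n p' e') \<le> P_err (bsc_mix n p e)"
proof -
  define f where "f j = (if j = a \<and> p' a = 0 then e a else if j = b \<and> p' b = 0 then e b else e' j)" for j
  have p'nn: "\<And>j. j < n \<Longrightarrow> 0 \<le> p' j" using pv' by (auto simp: prob_vec_def)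
  have pnn: "\<And>j. j < n \<Longrightarrow> 0 \<le> p j" using pv by (auto simp: prob_vec_def)
  have eq: "bsc_mix n p' e' = bsc_mix n p' f"
    by (rule bsc_cong[OF pv']) (auto simp: f_def)
  have fr: "\<And>l. l<n \<Longrightarrow> 0 \<le> f l \<and> f l \<le> 1" unfolding f_def using er e'r ab by auto
  have fo: "\<And>j. j<n \<Longrightarrow> j \<noteq> a \<Longrightarrow> j \<noteq> b \<Longrightarrow> f j = e j" unfolding f_def using oth by auto
  have fa: "f a \<le> e a" unfolding f_def using ia p'nn[OF ab(2)] ab(1) by auto
  have fb: "e b \<le> f b" unfolding f_def using ib p'nn[OF ab(3)] ab(1) by auto
  have fmom: "p' a * f a + p' b * f b = p a * e a + p b * e b"
    unfolding f_def using mom ab(1) by auto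
  obtain \<alpha> where \<alpha>: "0 \<le> \<alpha>" "\<alpha> \<le> p a" "\<alpha> \<le> p' a" "p a - \<alpha> \<le> p' b"
      "\<alpha> * f a + (p a - \<alpha>) * f b = p a * e a"
    using alpha_exists[OF p'nn[OF ab(2)] p'nn[OF ab(3)] pa pb mass fmom fa eab fb] by blast
  define R where "R j l = (if j = a \<and> l = a then \<alpha> else if j = b \<and> l = a then p a - \<alpha>
      else if j = a \<and> l = b then p' a - \<alpha> else if j = b \<and> l = b then p' b - p a + \<alpha>
      else if j = l then p j else 0)" for j l
  have Raa: "R a a = \<alpha>" by (simp add: R_def)
  have Rba: "R b a = p a - \<alpha>" using ab(1) by (simp add: R_def)
  have Rab: "R a b = p' a - \<alpha>" using ab(1) by (simp add: R_def)
  have Rbb: "R b b = p' b - p a + \<alpha>" using ab(1) by (simp add: R_def)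
  have Ro1: "R j l = (if j = l then p j else 0)" if "j \<noteq> a" "j \<noteq> b" for j l
    using that by (simp add: R_def)
  have Ro2: "R j l = (if j = l then p j else 0)" if "l \<noteq> a" "l \<noteq> b" for j l
    using that by (simp add: R_def)
  have Ro: "R j l = (if j = l then p j else 0)" if "j \<notin> {a,b} \<or> l \<notin> {a,b}" for j l
    using that Ro1 Ro2 by blast
  have Rnn: "0 \<le> R j l" if "j<n" "l<n" for j l
  proof (cases "j \<notin> {a,b} \<or> l \<notin> {a,b}")
    case True then show ?thesis using Ro[OF True] pnn that by simp
  next
    case False then show ?thesis using Raa Rba Rab Rbb \<alpha> by auto
  qed
  have Rrow: "(\<Sum>l<n. R j l) = p' j" if j: "j < n" for j
  proof -
    consider "j = a" | "j = b" | "j \<noteq> a \<and> j \<noteq> b" by blast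
    then show ?thesis
    proof cases
      case 1
      then have "(\<Sum>l<n. R j l) = R j a + R j b" by (intro sum_two[OF ab]) (simp add: Ro2 ab(1))
      then show ?thesis using 1 by (simp add: Raa Rab)
    next
      case 2
      then have "(\<Sum>l<n. R j l) = R j a + R j b" by (intro sum_two[OF ab]) (simp add: Ro2 ab(1))
      then show ?thesis using 2 by (simp add: Rba Rbb)
    next
      case 3
      then have "R j l = (if j = l then p j else 0)" for l by (simp add: Ro1)
      then show ?thesis using 3 j oth by simp
    qed
  qed
  have Rcol: "(\<Sum>j<n. R j l) = p l \<and> (\<Sum>j<n. R j l * f j) = p l * e l" if l: "l < n" for l
  proof -
    consider "l = a" | "l = b" | "l \<noteq> a \<and> l \<noteq> b" by blast
    then show ?thesis
    proof cases
      case 1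
      have "(\<Sum>j<n. R j l) = R a l + R b l" by (intro sum_two[OF ab]) (simp add: Ro1 1 ab(1))
      moreover have "(\<Sum>j<n. R j l * f j) = R a l * f a + R b l * f b" by (intro sum_two[OF ab]) (simp add: Ro1 1 ab(1))
      ultimately show ?thesis using 1 \<alpha>(5) by (simp add: Raa Rba)
    next
      case 2
      have "(\<Sum>j<n. R j l) = R a l + R b l" by (intro sum_two[OF ab]) (simp add: Ro1 2 ab(1))
      moreover have "(\<Sum>j<n. R j l * f j) = R a l * f a + R b l * f b" by (intro sum_two[OF ab]) (simp add: Ro1 2 ab(1))
      moreover have "(p' a - \<alpha>) * f a + (p' b - p a + \<alpha>) * f b = p b * e b"
        using fmom \<alpha>(5) by (simp add: algebra_simps)
      ultimately show ?thesis using 2 mass by (simp add: Rab Rbb)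
    next
      case 3
      then have h: "R j l = (if j = l then p l else 0)" for j by (simp add: Ro2)
      have s1: "(\<Sum>j<n. R j l) = (\<Sum>j<n. if j = l then p l else 0)"
        by (rule sum.cong[OF refl]) (simp add: h)
      have s2: "(\<Sum>j<n. R j l * f j) = (\<Sum>j<n. if j = l then p l * f l else 0)"
        by (rule sum.cong[OF refl]) (simp add: h)
      show ?thesis unfolding s1 s2 using 3 l fo by simp
    qed
  qed
  show ?thesis unfolding eq
    by (rule merge[OF pv' pv fr er Rnn Rrow]) (use Rcol in auto)
qed

lemma main_case:
  fixes m n a b :: nat and q \<sigma> p \<epsilon> :: "nat \<Rightarrow> real" and k \<kappa> :: "nat \<Rightarrow> nat \<Rightarrow> real"
  assumes q: "prob_vec m q"
    and \<sigma>r: "\<And>i. i<m \<Longrightarrow> 0 \<le> \<sigma> i \<and> \<sigma> i \<le> 1"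
    and p: "prob_vec n p" and p_pos: "\<And>j. j<n \<Longrightarrow> p j > 0"
    and \<epsilon>r: "\<And>j. j<n \<Longrightarrow> 0 \<le> \<epsilon> j \<and> \<epsilon> j \<le> 1"
    and PD: "P_degr n (bsc_mix n p \<epsilon>) (bsc_mix m q \<sigma>)"
    and kcs: "\<And>j. j<n \<Longrightarrow> (\<Sum>i<m. k i j) = p j"
    and k_col: "\<And>j. j<n \<Longrightarrow> (\<Sum>i<m. k i j * \<sigma> i) = p j * \<epsilon> j"
    and \<kappa>nn: "\<And>i j. i<m \<Longrightarrow> j<n \<Longrightarrow> 0 \<le> \<kappa> i j"
    and \<kappa>row: "\<And>i. i<m \<Longrightarrow> (\<Sum>j<n. \<kappa> i j) = q i"
    and ab: "a \<noteq> b" "a<n" "b<n"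
    and \<kappa>o: "\<And>i j. i<m \<Longrightarrow> j<n \<Longrightarrow> j\<noteq>a \<Longrightarrow> j\<noteq>b \<Longrightarrow> \<kappa> i j = k i j"
    and \<kappa>ab: "\<And>i. i<m \<Longrightarrow> \<kappa> i a + \<kappa> i b = k i a + k i b"
    and eab: "\<epsilon> a \<le> \<epsilon> b"
    and ia: "0 < (\<Sum>i<m. \<kappa> i a) \<Longrightarrow> (\<Sum>i<m. \<kappa> i a * \<sigma> i) \<le> (\<Sum>i<m. \<kappa> i a) * \<epsilon> a"
    and ib: "0 < (\<Sum>i<m. \<kappa> i b) \<Longrightarrow> (\<Sum>i<m. \<kappa> i b) * \<epsilon> b \<le> (\<Sum>i<m. \<kappa> i b * \<sigma> i)"
  shows "P_degr n (bsc_mix n p \<epsilon>) (mat_channel m n \<sigma> \<kappa>) \<and> P_degr n (mat_channel m n \<sigma> \<kappa>) (bsc_mix m q \<sigma>)"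
proof -
  define p' where "p' j = (\<Sum>i<m. \<kappa> i j)" for j
  define e' where "e' j = (if p' j > 0 then (\<Sum>i<m. \<kappa> i j * \<sigma> i) / p' j else 0)" for j
  have W': "mat_channel m n \<sigma> \<kappa> = bsc_mix n p' e'"
    unfolding mat_channel_def p'_def e'_def by simp
  have p'nn: "0 \<le> p' j" if "j < n" for j unfolding p'_def using \<kappa>nn that by (auto intro: sum_nonneg)
  have "(\<Sum>j<n. p' j) = (\<Sum>i<m. \<Sum>j<n. \<kappa> i j)" unfolding p'_def by (rule sum.swap)
  also have "\<dots> = (\<Sum>i<m. q i)" using \<kappa>row by simp
  also have "\<dots> = 1" using q by (simp add: prob_vec_def)
  finally have pv': "prob_vec n p'" unfolding prob_vec_def using p'nn by auto
  have mean: "p' j * e' j = (\<Sum>i<m. \<kappa> i j * \<sigma> i)" if j: "j < n" for j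
  proof (cases "p' j > 0")
    case True then show ?thesis unfolding e'_def by simp
  next
    case False
    then have z: "p' j = 0" using p'nn[OF j] by simp
    then have "\<forall>i\<in>{..<m}. \<kappa> i j = 0" unfolding p'_def using \<kappa>nn j
      by (subst sum_nonneg_eq_0_iff[symmetric]) auto
    then show ?thesis using z by simp
  qed
  have e'r: "0 \<le> e' j \<and> e' j \<le> 1" if j: "j < n" for j
  proof (cases "p' j > 0")
    case True
    have "0 \<le> (\<Sum>i<m. \<kappa> i j * \<sigma> i)" using \<kappa>nn \<sigma>r j by (auto intro!: sum_nonneg)
    moreover have "(\<Sum>i<m. \<kappa> i j * \<sigma> i) \<le> p' j" unfolding p'_def
      using \<kappa>nn \<sigma>r j by (auto intro!: sum_mono mult_left_le)
    ultimately show ?thesis using True unfolding e'_def by simp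
  next
    case False then show ?thesis unfolding e'_def by simp
  qed
  have degQ: "degraded (bsc_mix n p' e') (bsc_mix m q \<sigma>)"
    using merge[where R=\<kappa>, OF q pv' \<sigma>r e'r] \<kappa>nn \<kappa>row mean by (simp add: p'_def)
  have oth: "p' j = p j \<and> e' j = \<epsilon> j" if "j<n" "j \<noteq> a" "j \<noteq> b" for j
  proof -
    have "p' j = p j" unfolding p'_def using \<kappa>o that kcs by simp
    moreover have "(\<Sum>i<m. \<kappa> i j * \<sigma> i) = p j * \<epsilon> j" using \<kappa>o that k_col by simp
    ultimately show ?thesis using p_pos[OF that(1)] unfolding e'_def by simp
  qed
  have mass: "p' a + p' b = p a + p b"
    unfolding p'_def kcs[OF ab(2), symmetric] kcs[OF ab(3), symmetric] sum.distrib[symmetric]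
    using \<kappa>ab by simp
  have "p' a * e' a + p' b * e' b = (\<Sum>i<m. (\<kappa> i a + \<kappa> i b) * \<sigma> i)"
    unfolding mean[OF ab(2)] mean[OF ab(3)] sum.distrib[symmetric] by (simp add: algebra_simps)
  also have "\<dots> = (\<Sum>i<m. (k i a + k i b) * \<sigma> i)" using \<kappa>ab by simp
  also have "\<dots> = p a * \<epsilon> a + p b * \<epsilon> b"
    unfolding k_col[OF ab(2), symmetric] k_col[OF ab(3), symmetric] sum.distrib[symmetric]
    by (simp add: algebra_simps)
  finally have mom: "p' a * e' a + p' b * e' b = p a * \<epsilon> a + p b * \<epsilon> b" .
  have ia': "e' a \<le> \<epsilon> a" if "0 < p' a"
    using ia that unfolding e'_def p'_def by (simp add: divide_le_eq mult.commute)
  have ib': "\<epsilon> b \<le> e' b" if "0 < p' b"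
    using ib that unfolding e'_def p'_def by (simp add: le_divide_eq mult.commute)
  have tc: "degraded (bsc_mix n p \<epsilon>) (bsc_mix n p' e') \<and> P_err (bsc_mix n p' e') \<le> P_err (bsc_mix n p \<epsilon>)"
    by (rule two_col[OF p pv' \<epsilon>r e'r ab p_pos[OF ab(2)] p_pos[OF ab(3)] oth mass mom ia' ib' eab])
  have PD': "sym_channel (bsc_mix m q \<sigma>)" "in_B n (bsc_mix n p \<epsilon>)"
    "\<And>V. in_B n V \<Longrightarrow> degraded V (bsc_mix m q \<sigma>) \<Longrightarrow> P_err (bsc_mix n p \<epsilon>) \<le> P_err V"
    using PD unfolding P_degr_def by auto
  have inB': "in_B n (bsc_mix n p' e')"
    unfolding in_B_def ch_equiv_def using pv' e'r by blast
  show ?thesis unfolding W' P_degr_def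
    using sym_bsc[OF pv' e'r] PD' inB' tc degQ degraded_trans by (meson order_trans)
qed

lemma hs1: "(i0::nat) < m \<Longrightarrow> (\<Sum>i<m. (if i = i0 then c else 0)) = (c::real)"
  by simp

lemma hs2: "(i0::nat) < m \<Longrightarrow> (\<Sum>i<m. (if i = i0 then c else 0) * s i) = (c::real) * s i0"
proof -
  have "\<And>i. (if i = i0 then c else 0) * s i = (if i = i0 then c * s i0 else 0)" by simp
  then show "i0 < m \<Longrightarrow> ?thesis" by simp
qed

lemma hr: "(j0::nat) < n \<Longrightarrow> (\<Sum>j<n. if P \<and> j = j0 then c else 0) = (if P then c else (0::real))"
  by (cases P) simp_all

theorem lemma6:
  fixes m n :: nat and q \<sigma> p \<epsilon> :: "nat \<Rightarrow> real" and k :: "nat \<Rightarrow> nat \<Rightarrow> real"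
  assumes q: "prob_vec m q"
    and \<sigma>_mono: "\<And>i i'. i < i' \<Longrightarrow> i' < m \<Longrightarrow> \<sigma> i < \<sigma> i'"
    and \<sigma>_lo: "0 \<le> \<sigma> 0" and \<sigma>_hi: "\<sigma> (m - 1) \<le> 1/2"
    and p: "prob_vec n p" and p_pos: "\<And>j. j < n \<Longrightarrow> p j > 0"
    and \<epsilon>_mono: "\<And>j j'. j \<le> j' \<Longrightarrow> j' < n \<Longrightarrow> \<epsilon> j \<le> \<epsilon> j'"
    and \<epsilon>_lo: "\<sigma> 0 \<le> \<epsilon> 0" and \<epsilon>_hi: "\<epsilon> (n - 1) \<le> \<sigma> (m - 1)"
    and PD: "P_degr n (bsc_mix n p \<epsilon>) (bsc_mix m q \<sigma>)"
    and k: "one_matrix m n q p k"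
    and k_col: "\<And>j. j < n \<Longrightarrow> (\<Sum>i<m. k i j * \<sigma> i) = p j * \<epsilon> j"
  shows
   "(\<forall>i' j'. i' < m \<and> j' + 1 < n \<and> k i' j' \<noteq> 0 \<and> \<sigma> i' \<ge> \<epsilon> (j' + 1) \<longrightarrow>
       (let k' = (\<lambda>i j. if i = i' \<and> j = j' then 0
                        else if i = i' \<and> j = j' + 1 then k i' (j' + 1) + k i' j'
                        else k i j)
        in P_degr n (bsc_mix n p \<epsilon>) (mat_channel m n \<sigma> k')
           \<and> P_degr n (mat_channel m n \<sigma> k') (bsc_mix m q \<sigma>)))
  \<and> (\<forall>i'' j''. i'' < m \<and> 1 \<le> j'' \<and> j'' < n \<and> k i'' j'' \<noteq> 0 \<and> \<sigma> i'' \<le> \<epsilon> (j'' - 1) \<longrightarrow>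
       (let k'' = (\<lambda>i j. if i = i'' \<and> j = j'' then 0
                        else if i = i'' \<and> j = j'' - 1 then k i'' (j'' - 1) + k i'' j''
                        else k i j)
        in P_degr n (bsc_mix n p \<epsilon>) (mat_channel m n \<sigma> k'')
           \<and> P_degr n (mat_channel m n \<sigma> k'') (bsc_mix m q \<sigma>)))
  \<and> (\<forall>i\<^sub>l i\<^sub>u j\<^sub>l j\<^sub>u. i\<^sub>l < m \<and> i\<^sub>u < m \<and> j\<^sub>l < n \<and> j\<^sub>u < n \<and>
        k i\<^sub>l j\<^sub>u * k i\<^sub>u j\<^sub>l \<noteq> 0 \<and>
        \<epsilon> j\<^sub>l \<le> \<sigma> i\<^sub>l \<and> \<sigma> i\<^sub>l < \<sigma> i\<^sub>u \<and> \<sigma> i\<^sub>u \<le> \<epsilon> j\<^sub>u \<longrightarrow>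
       (let \<delta> = min (k i\<^sub>l j\<^sub>u) (k i\<^sub>u j\<^sub>l);
            ks = (\<lambda>i j. k i j
                    - (if (i, j) = (i\<^sub>l, j\<^sub>u) then \<delta> else 0)
                    - (if (i, j) = (i\<^sub>u, j\<^sub>l) then \<delta> else 0)
                    + (if (i, j) = (i\<^sub>l, j\<^sub>l) then \<delta> else 0)
                    + (if (i, j) = (i\<^sub>u, j\<^sub>u) then \<delta> else 0))
        in P_degr n (bsc_mix n p \<epsilon>) (mat_channel m n \<sigma> ks)
           \<and> P_degr n (mat_channel m n \<sigma> ks) (bsc_mix m q \<sigma>)))"
proof -
  have m1: "0 < m" using q by (cases m) (auto simp: prob_vec_def)
  have n1: "0 < n" using p by (cases n) (auto simp: prob_vec_def)
  have \<sigma>r: "0 \<le> \<sigma> i \<and> \<sigma> i \<le> 1" if i: "i < m" for i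
  proof -
    have "\<sigma> 0 \<le> \<sigma> i" using \<sigma>_mono[of 0 i] i by (cases "i = 0") auto
    moreover have "\<sigma> i \<le> \<sigma> (m - 1)"
    proof -
      have "i = m - 1 \<or> i < m - 1" using i by linarith
      then show ?thesis using \<sigma>_mono[of i "m - 1"] i by (auto intro: less_imp_le)
    qed
    ultimately show ?thesis using \<sigma>_lo \<sigma>_hi by linarith
  qed
  have \<epsilon>r: "0 \<le> \<epsilon> j \<and> \<epsilon> j \<le> 1" if j: "j < n" for j
  proof -
    have "\<epsilon> 0 \<le> \<epsilon> j" using \<epsilon>_mono[of 0 j] j by auto
    moreover have "\<epsilon> j \<le> \<epsilon> (n - 1)" using \<epsilon>_mono[of j "n - 1"] j by auto
    moreover have "\<sigma> (m - 1) \<le> 1" using \<sigma>_hi by simp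
    ultimately show ?thesis using \<sigma>_lo \<epsilon>_lo \<epsilon>_hi by linarith
  qed
  have knn: "\<And>i j. i < m \<Longrightarrow> j < n \<Longrightarrow> 0 \<le> k i j" and krow: "\<And>i. i < m \<Longrightarrow> (\<Sum>j<n. k i j) = q i"
    and kcs: "\<And>j. j < n \<Longrightarrow> (\<Sum>i<m. k i j) = p j"
    using k unfolding one_matrix_def by auto
  note MC = main_case[OF q \<sigma>r p p_pos \<epsilon>r PD kcs k_col, simplified]
  show ?thesis
  proof (intro conjI allI impI)
    fix i' j' assume H: "i' < m \<and> j' + 1 < n \<and> k i' j' \<noteq> 0 \<and> \<sigma> i' \<ge> \<epsilon> (j' + 1)"
    define \<kappa> where "\<kappa> = (\<lambda>i j. if i = i' \<and> j = j' then 0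
                        else if i = i' \<and> j = j' + 1 then k i' (j' + 1) + k i' j'
                        else k i j)"
    define c where "c = k i' j'"
    have c0: "0 < c" using knn[of i' j'] H unfolding c_def by auto
    have \<kappa>nn: "0 \<le> \<kappa> i j" if "i < m" "j < n" for i j
      using that H knn[of i' j'] knn[of i' "j'+1"] knn[of i j] unfolding \<kappa>_def by auto
    have \<kappa>dec: "\<kappa> i j = k i j + (if i = i' \<and> j = j'+1 then c else 0) - (if i = i' \<and> j = j' then c else 0)" for i j
      unfolding \<kappa>_def c_def by auto
    have \<kappa>row: "(\<Sum>j<n. \<kappa> i j) = q i" if "i < m" for i
      unfolding \<kappa>dec sum_subtractf sum.distrib using H that krow by (simp add: hr)
    have ka: "\<kappa> i j' = k i j' - (if i = i' then c else 0)" for i unfolding \<kappa>_def c_def by auto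
    have kb: "\<kappa> i (j'+1) = k i (j'+1) + (if i = i' then c else 0)" for i unfolding \<kappa>_def c_def by auto
    have sa: "(\<Sum>i<m. \<kappa> i j') = p j' - c" unfolding ka sum_subtractf using H kcs by simp
    have sa': "(\<Sum>i<m. \<kappa> i j' * \<sigma> i) = p j' * \<epsilon> j' - c * \<sigma> i'"
      unfolding ka left_diff_distrib sum_subtractf using H k_col hs2 by simp
    have sb: "(\<Sum>i<m. \<kappa> i (j'+1)) = p (j'+1) + c" unfolding kb sum.distrib using H kcs by simp
    have sb': "(\<Sum>i<m. \<kappa> i (j'+1) * \<sigma> i) = p (j'+1) * \<epsilon> (j'+1) + c * \<sigma> i'"
      unfolding kb distrib_right sum.distrib using H k_col hs2 by simp
    have eab: "\<epsilon> j' \<le> \<epsilon> (j'+1)" using \<epsilon>_mono H by simp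
    have m1': "c * \<epsilon> j' \<le> c * \<sigma> i'" using eab H c0 by (intro mult_left_mono) auto
    have m2': "c * \<epsilon> (j'+1) \<le> c * \<sigma> i'" using H c0 by (intro mult_left_mono) auto
    have "P_degr n (bsc_mix n p \<epsilon>) (mat_channel m n \<sigma> \<kappa>) \<and> P_degr n (mat_channel m n \<sigma> \<kappa>) (bsc_mix m q \<sigma>)"
    proof (rule MC[OF \<kappa>nn \<kappa>row])
      show "j' \<noteq> j' + 1" "j' < n" "j' + 1 < n" using H by auto
      show "\<kappa> i j = k i j" if "i < m" "j < n" "j \<noteq> j'" "j \<noteq> j' + 1" for i j
        using that unfolding \<kappa>_def by auto
      show "\<kappa> i j' + \<kappa> i (j' + 1) = k i j' + k i (j' + 1)" for i
        unfolding ka kb by simp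
      show "\<epsilon> j' \<le> \<epsilon> (j' + 1)" by (rule eab)
      show "(\<Sum>i<m. \<kappa> i j' * \<sigma> i) \<le> (\<Sum>i<m. \<kappa> i j') * \<epsilon> j'"
        unfolding sa sa' using m1' by (simp add: algebra_simps)
      show "(\<Sum>i<m. \<kappa> i (j' + 1)) * \<epsilon> (j' + 1) \<le> (\<Sum>i<m. \<kappa> i (j' + 1) * \<sigma> i)"
        unfolding sb sb' using m2' by (simp add: algebra_simps)
    qed
    then show "let k' = (\<lambda>i j. if i = i' \<and> j = j' then 0
                        else if i = i' \<and> j = j' + 1 then k i' (j' + 1) + k i' j'
                        else k i j)
        in P_degr n (bsc_mix n p \<epsilon>) (mat_channel m n \<sigma> k')
           \<and> P_degr n (mat_channel m n \<sigma> k') (bsc_mix m q \<sigma>)"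
      unfolding \<kappa>_def Let_def .
  next
    fix i'' j'' assume H: "i'' < m \<and> 1 \<le> j'' \<and> j'' < n \<and> k i'' j'' \<noteq> 0 \<and> \<sigma> i'' \<le> \<epsilon> (j'' - 1)"
    define \<kappa> where "\<kappa> = (\<lambda>i j. if i = i'' \<and> j = j'' then 0
                        else if i = i'' \<and> j = j'' - 1 then k i'' (j'' - 1) + k i'' j''
                        else k i j)"
    define c where "c = k i'' j''"
    define a where "a = j'' - 1"
    have aj: "j'' = a + 1" "a + 1 < n" using H unfolding a_def by auto
    have c0: "0 < c" using knn[of i'' j''] H unfolding c_def by auto
    have \<kappa>nn: "0 \<le> \<kappa> i j" if "i < m" "j < n" for i j
      using that H knn[of i'' j''] knn[of i'' "j''-1"] knn[of i j] unfolding \<kappa>_def by auto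
    have \<kappa>dec: "\<kappa> i j = k i j + (if i = i'' \<and> j = a then c else 0) - (if i = i'' \<and> j = a + 1 then c else 0)" for i j
      unfolding \<kappa>_def c_def a_def using aj unfolding a_def by auto
    have \<kappa>row: "(\<Sum>j<n. \<kappa> i j) = q i" if "i < m" for i
      unfolding \<kappa>dec sum_subtractf sum.distrib using aj that krow by (simp add: hr)
    have ka: "\<kappa> i a = k i a + (if i = i'' then c else 0)" for i unfolding \<kappa>dec by simp
    have kb: "\<kappa> i (a+1) = k i (a+1) - (if i = i'' then c else 0)" for i unfolding \<kappa>dec by simp
    have sa: "(\<Sum>i<m. \<kappa> i a) = p a + c" unfolding ka sum.distrib using H aj kcs by simp
    have sa': "(\<Sum>i<m. \<kappa> i a * \<sigma> i) = p a * \<epsilon> a + c * \<sigma> i''"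
      unfolding ka distrib_right sum.distrib using H aj k_col hs2 by simp
    have sb: "(\<Sum>i<m. \<kappa> i (a+1)) = p (a+1) - c" unfolding kb sum_subtractf using H aj kcs by simp
    have sb': "(\<Sum>i<m. \<kappa> i (a+1) * \<sigma> i) = p (a+1) * \<epsilon> (a+1) - c * \<sigma> i''"
      unfolding kb left_diff_distrib sum_subtractf using H aj k_col hs2 by simp
    have eab: "\<epsilon> a \<le> \<epsilon> (a+1)" using \<epsilon>_mono aj by simp
    have m1': "c * \<sigma> i'' \<le> c * \<epsilon> a" using H c0 unfolding a_def by (intro mult_left_mono) auto
    have m2': "c * \<sigma> i'' \<le> c * \<epsilon> (a+1)" using eab H c0 unfolding a_def by (intro mult_left_mono) auto
    have "P_degr n (bsc_mix n p \<epsilon>) (mat_channel m n \<sigma> \<kappa>) \<and> P_degr n (mat_channel m n \<sigma> \<kappa>) (bsc_mix m q \<sigma>)"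
    proof (rule MC[OF \<kappa>nn \<kappa>row])
      show "a \<noteq> a + 1" "a < n" "a + 1 < n" using aj by auto
      show "\<kappa> i j = k i j" if "i < m" "j < n" "j \<noteq> a" "j \<noteq> a + 1" for i j
        using that unfolding \<kappa>dec by auto
      show "\<kappa> i a + \<kappa> i (a + 1) = k i a + k i (a + 1)" for i
        unfolding ka kb by simp
      show "\<epsilon> a \<le> \<epsilon> (a + 1)" by (rule eab)
      show "(\<Sum>i<m. \<kappa> i a * \<sigma> i) \<le> (\<Sum>i<m. \<kappa> i a) * \<epsilon> a"
        unfolding sa sa' using m1' by (simp add: algebra_simps)
      show "(\<Sum>i<m. \<kappa> i (a + 1)) * \<epsilon> (a + 1) \<le> (\<Sum>i<m. \<kappa> i (a + 1) * \<sigma> i)"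
        unfolding sb sb' using m2' by (simp add: algebra_simps)
    qed
    then show "let k'' = (\<lambda>i j. if i = i'' \<and> j = j'' then 0
                        else if i = i'' \<and> j = j'' - 1 then k i'' (j'' - 1) + k i'' j''
                        else k i j)
        in P_degr n (bsc_mix n p \<epsilon>) (mat_channel m n \<sigma> k'')
           \<and> P_degr n (mat_channel m n \<sigma> k'') (bsc_mix m q \<sigma>)"
      unfolding \<kappa>_def Let_def .
  next
    fix il iu jl ju assume H: "il < m \<and> iu < m \<and> jl < n \<and> ju < n \<and>
        k il ju * k iu jl \<noteq> 0 \<and>
        \<epsilon> jl \<le> \<sigma> il \<and> \<sigma> il < \<sigma> iu \<and> \<sigma> iu \<le> \<epsilon> ju"
    define \<delta> where "\<delta> = min (k il ju) (k iu jl)"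
    define \<kappa> where "\<kappa> = (\<lambda>i j. k i j
                    - (if (i, j) = (il, ju) then \<delta> else 0)
                    - (if (i, j) = (iu, jl) then \<delta> else 0)
                    + (if (i, j) = (il, jl) then \<delta> else 0)
                    + (if (i, j) = (iu, ju) then \<delta> else 0))"
    have ne: "il \<noteq> iu" "jl \<noteq> ju" using H by auto
    have d0: "0 \<le> \<delta>" "\<delta> \<le> k il ju" "\<delta> \<le> k iu jl" using H knn[of il ju] knn[of iu jl] unfolding \<delta>_def by auto
    have \<kappa>dec: "\<kappa> i j = k i j - (if i = il \<and> j = ju then \<delta> else 0) - (if i = iu \<and> j = jl then \<delta> else 0)
       + (if i = il \<and> j = jl then \<delta> else 0) + (if i = iu \<and> j = ju then \<delta> else 0)" for i j
      unfolding \<kappa>_def by simp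
    have \<kappa>nn: "0 \<le> \<kappa> i j" if "i < m" "j < n" for i j
      using that ne d0 knn[of i j] unfolding \<kappa>dec by auto
    have \<kappa>row: "(\<Sum>j<n. \<kappa> i j) = q i" if "i < m" for i
      unfolding \<kappa>dec sum_subtractf sum.distrib using H that krow by (simp add: hr)
    have ka: "\<kappa> i jl = k i jl + (if i = il then \<delta> else 0) - (if i = iu then \<delta> else 0)" for i
      unfolding \<kappa>dec using ne by simp
    have kb: "\<kappa> i ju = k i ju + (if i = iu then \<delta> else 0) - (if i = il then \<delta> else 0)" for i
      unfolding \<kappa>dec using ne by simp
    have sa: "(\<Sum>i<m. \<kappa> i jl) = p jl" unfolding ka sum_subtractf sum.distrib using H kcs by simp
    have sa': "(\<Sum>i<m. \<kappa> i jl * \<sigma> i) = p jl * \<epsilon> jl + \<delta> * \<sigma> il - \<delta> * \<sigma> iu"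
      unfolding ka left_diff_distrib distrib_right sum_subtractf sum.distrib using H k_col hs2 by simp
    have sb: "(\<Sum>i<m. \<kappa> i ju) = p ju" unfolding kb sum_subtractf sum.distrib using H kcs by simp
    have sb': "(\<Sum>i<m. \<kappa> i ju * \<sigma> i) = p ju * \<epsilon> ju + \<delta> * \<sigma> iu - \<delta> * \<sigma> il"
      unfolding kb left_diff_distrib distrib_right sum_subtractf sum.distrib using H k_col hs2 by simp
    have mm: "\<delta> * \<sigma> il \<le> \<delta> * \<sigma> iu" using H d0 by (intro mult_left_mono) auto
    have "P_degr n (bsc_mix n p \<epsilon>) (mat_channel m n \<sigma> \<kappa>) \<and> P_degr n (mat_channel m n \<sigma> \<kappa>) (bsc_mix m q \<sigma>)"
    proof (rule MC[OF \<kappa>nn \<kappa>row])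
      show "jl \<noteq> ju" "jl < n" "ju < n" using H ne by auto
      show "\<kappa> i j = k i j" if "i < m" "j < n" "j \<noteq> jl" "j \<noteq> ju" for i j
        using that unfolding \<kappa>dec by auto
      show "\<kappa> i jl + \<kappa> i ju = k i jl + k i ju" for i
        unfolding ka kb by simp
      show "\<epsilon> jl \<le> \<epsilon> ju" using H by linarith
      show "(\<Sum>i<m. \<kappa> i jl * \<sigma> i) \<le> (\<Sum>i<m. \<kappa> i jl) * \<epsilon> jl"
        unfolding sa sa' using mm by (simp add: algebra_simps)
      show "(\<Sum>i<m. \<kappa> i ju) * \<epsilon> ju \<le> (\<Sum>i<m. \<kappa> i ju * \<sigma> i)"
        unfolding sb sb' using mm by (simp add: algebra_simps)
    qed
    then show "let \<delta> = min (k il ju) (k iu jl);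
            ks = (\<lambda>i j. k i j
                    - (if (i, j) = (il, ju) then \<delta> else 0)
                    - (if (i, j) = (iu, jl) then \<delta> else 0)
                    + (if (i, j) = (il, jl) then \<delta> else 0)
                    + (if (i, j) = (iu, ju) then \<delta> else 0))
        in P_degr n (bsc_mix n p \<epsilon>) (mat_channel m n \<sigma> ks)
           \<and> P_degr n (mat_channel m n \<sigma> ks) (bsc_mix m q \<sigma>)"
      unfolding \<kappa>_def \<delta>_def Let_def .
  qed
qed

end
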